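(* Let $\mathcal{Z}_0$ be the signaling scheme output by the Split-and-Match procedure on $\mathcal{D}$. Then for every signaling scheme $\mathcal{Z}'$ for $\mathcal{D}$ and every $m\in(0,1]$, \[4\int_0^m s_{\mathcal{Z}_0}(x)\,dx\ \ge\ \int_0^m s_{\mathcal{Z}'}(x)\,dx.\]
   Context: Values and prior. $0<v_1<\dots<v_n$ are reals, and $v_0:=0$. $\mathcal{D}$ is a distribution on $\{v_1,\dots,v_n\}$ with $f_{\mathcal{D}}(v_i)>0$ and CDF $F_{\mathcal{D}}$. Signals and pricing. A signal is a distribution $S$ on these values, with $G_S(p)=\Pr_{v\sim S}[v\ge p]$. The seller posts $p^*_S$, the smallest $v$ in the support of $S$ maximizing $v\,G_S(v)$. The surplus of value $v$ is $cs_v(S)=\mathbb{1}[v\ge p^*_S](v-p^*_S)$. Signaling schemes. A signaling scheme is $\mathcal{Z}=\{(S_q,\gamma_q)\}_{q\in[Q]}$ with $\gamma_q\ge0$, $\sum\gamma_q=1$ and $\sum_q\gamma_q f_{S_q}=f_{\mathcal{D}}$. Its expected consumer surplus at $v_i$ is $cs_{v_i}(\mathcal{Z})=\sum_q cs_{v_i}(S_q)\gamma_q f_{S_q}(v_i)/f_{\mathcal{D}}(v_i)$. The surplus-mass function $s_{\mathcal{Z}}$ on $(0,1]$ equals $cs_{v_i}(\mathcal{Z})$ on $(F_{\mathcal{D}}(v_{i-1}),F_{\mathcal{D}}(v_i)]$. Special signals. For $a<b$ in $\{v_1,\dots,v_n\}$, the equal-revenue binary signal $S^E_{a,b}$ puts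 mass $1-a/b$ on $a$ and $a/b$ on $b$. A singleton signal on $v_i$ puts mass $1$ on $v_i$. Split-and-Match procedure. 1. Initialize $g_i=t_i=\tfrac12 f_{\mathcal{D}}(v_i)$ for all $i$. 2. Repeat: - let $s$ be the smallest index with $g_s>0$; - let $\ell$ be the smallest index $>s$ with $t_\ell>0$; - if no such pair $(s,\ell)$ exists, stop; - otherwise add the signal $S^E_{v_s,v_\ell}$ with weight $\gamma=\min\{g_s/(1-v_s/v_\ell),\ t_\ell/(v_s/v_\ell)\}$; - set $g_s\leftarrow g_s-\gamma(1-v_s/v_\ell)$ and $t_\ell\leftarrow t_\ell-\gamma v_s/v_\ell$. 3. Finally, for each $i$, the mass of $\mathcal{D}$ at $v_i$ not yet used by the added binary signals is covered by a singleton signal on $v_i$ with weight equal to that remaining mass. The resulting family is $\mathcal{Z}_0$. *)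

theory Defs
  imports "HOL-Analysis.Analysis" "HOL-Library.While_Combinator"
begin

text \<open>Values are v 1 < ... < v n (indices 1..n); a distribution / signal on the
values is a function on indices (nat => real) that is zero outside 1..n.\<close>

type_synonym signal = "nat \<Rightarrow> real"
type_synonym scheme = "(signal \<times> real) list"

definition is_signal :: "nat \<Rightarrow> signal \<Rightarrow> bool" where
  "is_signal n S \<longleftrightarrow> (\<forall>j. 0 \<le> S j) \<and> (\<forall>j. j \<notin> {1..n} \<longrightarrow> S j = 0)
     \<and> (\<Sum>j=1..n. S j) = 1"

definition supp_sig :: "nat \<Rightarrow> signal \<Rightarrow> nat set" where
  "supp_sig n S = {j \<in> {1..n}. S j > 0}"

definition G_sig :: "nat \<Rightarrow> (nat \<Rightarrow> real) \<Rightarrow> signal \<Rightarrow> real \<Rightarrow> real" where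
  "G_sig n v S p = (\<Sum>j\<in>{j\<in>{1..n}. v j \<ge> p}. S j)"

text \<open>Index of the posted price: the smallest support value maximizing revenue
(v strictly increasing, so smallest value = smallest index).\<close>
definition price_idx :: "nat \<Rightarrow> (nat \<Rightarrow> real) \<Rightarrow> signal \<Rightarrow> nat" where
  "price_idx n v S = (LEAST i. i \<in> supp_sig n S \<and>
      (\<forall>j\<in>supp_sig n S. v j * G_sig n v S (v j) \<le> v i * G_sig n v S (v i)))"

definition cs_sig :: "nat \<Rightarrow> (nat \<Rightarrow> real) \<Rightarrow> signal \<Rightarrow> nat \<Rightarrow> real" where
  "cs_sig n v S i = (if v i \<ge> v (price_idx n v S) then v i - v (price_idx n v S) else 0)"

definition is_scheme :: "nat \<Rightarrow> (nat \<Rightarrow> real) \<Rightarrow> scheme \<Rightarrow> bool" where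
  "is_scheme n f Z \<longleftrightarrow> (\<forall>(S,\<gamma>)\<in>set Z. 0 \<le> \<gamma> \<and> is_signal n S)
     \<and> sum_list (map snd Z) = 1
     \<and> (\<forall>i\<in>{1..n}. sum_list (map (\<lambda>(S,\<gamma>). \<gamma> * S i) Z) = f i)"

definition cs_scheme :: "nat \<Rightarrow> (nat \<Rightarrow> real) \<Rightarrow> (nat \<Rightarrow> real) \<Rightarrow> scheme \<Rightarrow> nat \<Rightarrow> real" where
  "cs_scheme n v f Z i = sum_list (map (\<lambda>(S,\<gamma>). cs_sig n v S i * \<gamma> * S i / f i) Z)"

definition cdf :: "(nat \<Rightarrow> real) \<Rightarrow> nat \<Rightarrow> real" where
  "cdf f i = (\<Sum>j=1..i. f j)"

definition surplus_mass :: "nat \<Rightarrow> (nat \<Rightarrow> real) \<Rightarrow> (nat \<Rightarrow> real) \<Rightarrow> scheme \<Rightarrow> real \<Rightarrow> real" where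
  "surplus_mass n v f Z x =
     (\<Sum>i=1..n. if cdf f (i - 1) < x \<and> x \<le> cdf f i then cs_scheme n v f Z i else 0)"

definition eq_rev_sig :: "(nat \<Rightarrow> real) \<Rightarrow> nat \<Rightarrow> nat \<Rightarrow> signal" where
  "eq_rev_sig v a b = (\<lambda>j. if j = a then 1 - v a / v b else if j = b then v a / v b else 0)"

definition singleton_sig :: "nat \<Rightarrow> signal" where
  "singleton_sig i = (\<lambda>j. if j = i then 1 else 0)"

text \<open>Split-and-Match. State: (g, t, list of added binary signals ((s,l), weight)).\<close>
type_synonym sm_state = "(nat \<Rightarrow> real) \<times> (nat \<Rightarrow> real) \<times> ((nat \<times> nat) \<times> real) list"

definition sm_s :: "nat \<Rightarrow> (nat \<Rightarrow> real) \<Rightarrow> nat" where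
  "sm_s n g = (LEAST s. 1 \<le> s \<and> s \<le> n \<and> g s > 0)"

definition sm_l :: "nat \<Rightarrow> nat \<Rightarrow> (nat \<Rightarrow> real) \<Rightarrow> nat" where
  "sm_l n s t = (LEAST l. s < l \<and> l \<le> n \<and> t l > 0)"

definition sm_cont :: "nat \<Rightarrow> sm_state \<Rightarrow> bool" where
  "sm_cont n st = (case st of (g, t, L) \<Rightarrow>
      (\<exists>s. 1 \<le> s \<and> s \<le> n \<and> g s > 0) \<and>
      (\<exists>l. sm_s n g < l \<and> l \<le> n \<and> t l > 0))"

definition sm_step :: "nat \<Rightarrow> (nat \<Rightarrow> real) \<Rightarrow> sm_state \<Rightarrow> sm_state" where
  "sm_step n v st = (case st of (g, t, L) \<Rightarrow>
      let s = sm_s n g; l = sm_l n s t;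
          \<gamma> = min (g s / (1 - v s / v l)) (t l / (v s / v l))
      in (g(s := g s - \<gamma> * (1 - v s / v l)), t(l := t l - \<gamma> * (v s / v l)),
          L @ [((s, l), \<gamma>)]))"

definition split_and_match_binary :: "nat \<Rightarrow> (nat \<Rightarrow> real) \<Rightarrow> (nat \<Rightarrow> real) \<Rightarrow> ((nat \<times> nat) \<times> real) list" where
  "split_and_match_binary n v f =
     (case the (while_option (sm_cont n) (sm_step n v) (\<lambda>i. f i / 2, \<lambda>i. f i / 2, []))
      of (g, t, L) \<Rightarrow> L)"

definition split_and_match :: "nat \<Rightarrow> (nat \<Rightarrow> real) \<Rightarrow> (nat \<Rightarrow> real) \<Rightarrow> scheme" where
  "split_and_match n v f =
     (let L = split_and_match_binary n v f in
        map (\<lambda>((s, l), \<gamma>). (eq_rev_sig v s l, \<gamma>)) L @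
        map (\<lambda>i. (singleton_sig i,
                   f i - sum_list (map (\<lambda>((s, l), \<gamma>). \<gamma> * eq_rev_sig v s l i) L))) [1..<n+1])"

end

theory Submission
  imports Defs
begin

lemma sum_list_sum_swap:
  "(\<Sum>i\<in>A. sum_list (map (h i) L)) = sum_list (map (\<lambda>p. \<Sum>i\<in>A. h i p) L)"
  by (induction L) (simp_all add: sum.distrib)

lemma sum_last:
  fixes k :: nat and h :: "nat \<Rightarrow> real"
  assumes "1 \<le> k" shows "(\<Sum>i=1..k. h i) = (\<Sum>i=1..k-1. h i) + h k"
proof -
  obtain k' where "k = Suc k'" using assms by (cases k) auto
  then show ?thesis by (simp add: sum.cl_ivl_Suc)
qed

lemma sum_split_at:
  fixes g :: "nat \<Rightarrow> real"
  assumes "a \<le> Suc k" "k \<le> n"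
  shows "sum g {a..n} = sum g {a..k} + sum g {Suc k..n}"
proof -
  have "{a..n} = {a..k} \<union> {Suc k..n}" using assms by auto
  moreover have "{a..k} \<inter> {Suc k..n} = {}" by auto
  ultimately show ?thesis by (simp add: sum.union_disjoint)
qed

definition CSk :: "(nat \<Rightarrow> real) \<Rightarrow> nat \<Rightarrow> ((nat \<times> nat) \<times> real) list \<Rightarrow> real" where
  "CSk v k L = sum_list (map (\<lambda>((s,l),\<gamma>). if l \<le> k then \<gamma> * (v s / v l) * (v l - v s) else 0) L)"

lemma lin_swap:
  fixes v :: "nat \<Rightarrow> real" and Z :: scheme
  shows "sum_list (map (\<lambda>(S,\<gamma>). \<gamma> * ((\<Sum>j\<in>A. S j * v j) - c * (\<Sum>j\<in>B. S j))) Z)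
   = (\<Sum>j\<in>A. v j * sum_list (map (\<lambda>(S,\<gamma>). \<gamma> * S j) Z)) - c * (\<Sum>j\<in>B. sum_list (map (\<lambda>(S,\<gamma>). \<gamma> * S j) Z))"
proof (induction Z)
  case Nil then show ?case by simp
next
  case (Cons p Z)
  obtain S g where p: "p = (S,g)" by (cases p)
  have "(\<Sum>j\<in>A. v j * (g * S j + sum_list (map (\<lambda>(S,\<gamma>). \<gamma> * S j) Z)))
     = g * (\<Sum>j\<in>A. S j * v j) + (\<Sum>j\<in>A. v j * sum_list (map (\<lambda>(S,\<gamma>). \<gamma> * S j) Z))"
    by (simp add: sum.distrib distrib_left sum_distrib_left mult_ac)
  moreover have "(\<Sum>j\<in>B. g * S j + sum_list (map (\<lambda>(S,\<gamma>). \<gamma> * S j) Z))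
     = g * (\<Sum>j\<in>B. S j) + (\<Sum>j\<in>B. sum_list (map (\<lambda>(S,\<gamma>). \<gamma> * S j) Z))"
    by (simp add: sum.distrib sum_distrib_left)
  ultimately show ?case using Cons p by (simp add: algebra_simps)
qed

definition ug :: "(nat \<Rightarrow> real) \<Rightarrow> ((nat \<times> nat) \<times> real) list \<Rightarrow> nat \<Rightarrow> real" where
  "ug v L i = sum_list (map (\<lambda>((s,l),\<gamma>). if s = i then \<gamma> * (1 - v s / v l) else 0) L)"

definition ugk :: "(nat \<Rightarrow> real) \<Rightarrow> nat \<Rightarrow> ((nat \<times> nat) \<times> real) list \<Rightarrow> nat \<Rightarrow> real" where
  "ugk v k L i = sum_list (map (\<lambda>((s,l),\<gamma>). if s = i \<and> l \<le> k then \<gamma> * (1 - v s / v l) else 0) L)"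

definition ut :: "(nat \<Rightarrow> real) \<Rightarrow> ((nat \<times> nat) \<times> real) list \<Rightarrow> nat \<Rightarrow> real" where
  "ut v L i = sum_list (map (\<lambda>((s,l),\<gamma>). if l = i then \<gamma> * (v s / v l) else 0) L)"

definition sm_inv :: "nat \<Rightarrow> (nat \<Rightarrow> real) \<Rightarrow> (nat \<Rightarrow> real) \<Rightarrow> sm_state \<Rightarrow> bool" where
  "sm_inv n v f st = (case st of (g,t,L) \<Rightarrow>
     (\<forall>i\<in>{1..n}. 0 \<le> g i \<and> 0 \<le> t i) \<and>
     (\<forall>i. g i = f i / 2 - ug v L i) \<and> (\<forall>i. t i = f i / 2 - ut v L i) \<and>
     (\<forall>s l \<gamma>. ((s,l),\<gamma>) \<in> set L \<longrightarrow> 1 \<le> s \<and> s < l \<and> l \<le> n \<and> 0 \<le> \<gamma>) \<and>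
     (\<forall>s l \<gamma> i. ((s,l),\<gamma>) \<in> set L \<longrightarrow> 1 \<le> i \<longrightarrow> i < s \<longrightarrow> g i = 0) \<and>
     (\<forall>s l \<gamma> j. ((s,l),\<gamma>) \<in> set L \<longrightarrow> s < j \<longrightarrow> j < l \<longrightarrow> t j = 0) \<and>
     (\<forall>s1 l1 \<gamma>1 s2 l2 \<gamma>2. ((s1,l1),\<gamma>1) \<in> set L \<longrightarrow> ((s2,l2),\<gamma>2) \<in> set L \<longrightarrow> s1 < s2 \<longrightarrow> l1 \<le> l2))"

definition sm_mu :: "nat \<Rightarrow> sm_state \<Rightarrow> nat" where
  "sm_mu n st = (case st of (g,t,L) \<Rightarrow> card {i\<in>{1..n}. 0 < g i} + card {i\<in>{1..n}. 0 < t i})"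

lemma ind_integral:
  fixes a b m c :: real
  assumes "0 \<le> a" "a \<le> b" "0 \<le> m"
  shows "((\<lambda>x. if a < x \<and> x \<le> b then c else 0) has_integral (c * (min m b - min m a))) {0..m}"
proof -
  define a' where "a' = min m a"
  define b' where "b' = min m b"
  have ab: "0 \<le> a'" "a' \<le> b'" "b' \<le> m" using assms by (auto simp: a'_def b'_def)
  have "((\<lambda>x. c) has_integral ((b' - a') *\<^sub>R c)) {a'..b'}"
    using has_integral_const_real[of c a' b'] ab by simp
  then have "((\<lambda>x. if x \<in> cbox a' b' then c else 0) has_integral ((b' - a') *\<^sub>R c)) (cbox 0 m)"
    using ab by (intro has_integral_restrict_closed_subinterval) auto
  then have h: "((\<lambda>x. if x \<in> {a'..b'} then c else 0) has_integral (c * (b' - a'))) {0..m}"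
    using ab by (simp add: mult.commute)
  show ?thesis unfolding a'_def[symmetric] b'_def[symmetric]
  proof (rule has_integral_spike_finite[OF _ _ h, of "{a'}"])
    fix x assume x: "x \<in> {0..m} - {a'}"
    show "(if a < x \<and> x \<le> b then c else 0) = (if x \<in> {a'..b'} then c else 0)"
      using x assms by (auto simp: a'_def b'_def min_def split: if_splits)
  qed auto
qed

context
  fixes n :: nat and v :: "nat \<Rightarrow> real" and f :: "nat \<Rightarrow> real"
  assumes v_pos: "0 < v 1" and v_mono: "strict_mono_on {1..n} v"
    and f_pos: "\<And>i. i \<in> {1..n} \<Longrightarrow> 0 < f i"
begin

lemma vlt: "a \<in> {1..n} \<Longrightarrow> b \<in> {1..n} \<Longrightarrow> a < b \<Longrightarrow> v a < v b"
  by (rule strict_mono_onD[OF v_mono])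

lemma vle_iff: assumes "i \<in> {1..n}" "j \<in> {1..n}" shows "v i \<le> v j \<longleftrightarrow> i \<le> j"
proof (cases rule: linorder_cases[of i j])
  case less then show ?thesis using vlt[OF assms less] by simp
next
  case equal then show ?thesis by simp
next
  case greater then show ?thesis using vlt[OF assms(2,1) greater] by simp
qed

lemma vless_iff: assumes "i \<in> {1..n}" "j \<in> {1..n}" shows "v i < v j \<longleftrightarrow> i < j"
proof (cases rule: linorder_cases[of i j])
  case less then show ?thesis using vlt[OF assms less] by simp
next
  case equal then show ?thesis by simp
next
  case greater then show ?thesis using vlt[OF assms(2,1) greater] by simp
qed

lemma vpos: "i \<in> {1..n} \<Longrightarrow> 0 < v i"
proof -
  assume i: "i \<in> {1..n}"
  show "0 < v i"
  proof (cases "i = 1")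
    case True then show ?thesis using v_pos by simp
  next
    case False
    then have "v 1 < v i" using i vless_iff[of 1 i] by auto
    then show ?thesis using v_pos by simp
  qed
qed

lemma price_props:
  assumes S: "is_signal n S"
  shows "price_idx n v S \<in> supp_sig n S \<and>
    (\<forall>j\<in>supp_sig n S. v j * G_sig n v S (v j) \<le> v (price_idx n v S) * G_sig n v S (v (price_idx n v S)))"
proof -
  define rv where "rv = (\<lambda>j. v j * G_sig n v S (v j))"
  have fin: "finite (supp_sig n S)" unfolding supp_sig_def by auto
  have ne: "supp_sig n S \<noteq> {}"
  proof
    assume e: "supp_sig n S = {}"
    have "\<forall>j\<in>{1..n}. S j = 0"
    proof
      fix j assume j: "j \<in> {1..n}"
      have "S j \<ge> 0" using S by (simp add: is_signal_def)
      moreover have "\<not> S j > 0" using e j unfolding supp_sig_def by auto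
      ultimately show "S j = 0" by simp
    qed
    then have "(\<Sum>j=1..n. S j) = 0" by simp
    then show False using S by (simp add: is_signal_def)
  qed
  have "Max (rv ` supp_sig n S) \<in> rv ` supp_sig n S" using fin ne by simp
  then obtain i where i: "i \<in> supp_sig n S" "rv i = Max (rv ` supp_sig n S)" by force
  have "\<forall>j\<in>supp_sig n S. rv j \<le> rv i" using i fin by simp
  then have P: "i \<in> supp_sig n S \<and> (\<forall>j\<in>supp_sig n S. rv j \<le> rv i)" using i by simp
  have P': "i \<in> supp_sig n S \<and> (\<forall>j\<in>supp_sig n S. v j * G_sig n v S (v j) \<le> v i * G_sig n v S (v i))"
    using P by (simp add: rv_def)
  show ?thesis unfolding price_idx_def using P' by (rule LeastI)
qed

lemma G_eq: "i \<in> {1..n} \<Longrightarrow> G_sig n v S (v i) = (\<Sum>j=i..n. S j)"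
proof -
  assume i: "i \<in> {1..n}"
  have "{j\<in>{1..n}. v i \<le> v j} = {i..n}" using i vle_iff[of i] by auto
  then show ?thesis unfolding G_sig_def by simp
qed

lemma price_range:
  assumes "is_signal n S"
  shows "price_idx n v S \<in> {1..n}" "S (price_idx n v S) > 0"
  using price_props[OF assms] unfolding supp_sig_def by auto

lemma rev_bound:
  assumes S: "is_signal n S" and i: "i \<in> {1..n}"
  shows "v i * (\<Sum>j=i..n. S j) \<le> v (price_idx n v S) * (\<Sum>j=price_idx n v S..n. S j)"
proof -
  define p where "p = price_idx n v S"
  have p: "p \<in> {1..n}" using price_range[OF S] p_def by auto
  have S0: "\<And>j. 0 \<le> S j" using S by (simp add: is_signal_def)
  have Rnn: "0 \<le> v p * (\<Sum>j=p..n. S j)"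
    using vpos[OF p] S0 by (simp add: sum_nonneg)
  show ?thesis
  proof (cases "\<exists>j\<in>{i..n}. S j > 0")
    case True
    define i' where "i' = (LEAST j. j \<in> {i..n} \<and> S j > 0)"
    have ex: "\<exists>j. j \<in> {i..n} \<and> S j > 0" using True by blast
    have i': "i' \<in> {i..n}" "S i' > 0"
      using LeastI_ex[OF ex] unfolding i'_def by auto
    have below: "\<And>j. j \<in> {i..<i'} \<Longrightarrow> S j = 0"
    proof -
      fix j assume j: "j \<in> {i..<i'}"
      have "\<not> (j \<in> {i..n} \<and> S j > 0)" using not_less_Least[of j "\<lambda>j. j \<in> {i..n} \<and> S j > 0"] j
        unfolding i'_def by auto
      then show "S j = 0" using j i' S0[of j] by auto
    qed
    have "{i..n} = {i..<i'} \<union> {i'..n}" using i' by auto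
    moreover have "{i..<i'} \<inter> {i'..n} = {}" by auto
    ultimately have "(\<Sum>j=i..n. S j) = (\<Sum>j\<in>{i..<i'}. S j) + (\<Sum>j=i'..n. S j)"
      by (simp add: sum.union_disjoint)
    also have "(\<Sum>j\<in>{i..<i'}. S j) = 0" using below by simp
    finally have eq: "(\<Sum>j=i..n. S j) = (\<Sum>j=i'..n. S j)" by simp
    have i'n: "i' \<in> {1..n}" using i' i by auto
    have supp: "i' \<in> supp_sig n S" using i'n i' unfolding supp_sig_def by auto
    have "v i' * G_sig n v S (v i') \<le> v p * G_sig n v S (v p)"
      using price_props[OF S] supp p_def by auto
    then have r: "v i' * (\<Sum>j=i'..n. S j) \<le> v p * (\<Sum>j=p..n. S j)"
      using G_eq[OF i'n] G_eq[OF p] by simp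
    have "v i \<le> v i'" using vle_iff[OF i i'n] i' by auto
    then have "v i * (\<Sum>j=i'..n. S j) \<le> v i' * (\<Sum>j=i'..n. S j)"
      by (intro mult_right_mono) (auto intro: sum_nonneg S0)
    then show ?thesis using eq r p_def by simp
  next
    case False
    then have "(\<Sum>j=i..n. S j) = 0" using S0 by (intro sum.neutral) (metis less_eq_real_def)
    then show ?thesis using Rnn p_def by simp
  qed
qed

lemma cs_eq:
  assumes S: "is_signal n S" and j: "j \<in> {1..n}"
  shows "cs_sig n v S j = (if price_idx n v S \<le> j then v j - v (price_idx n v S) else 0)"
  using vle_iff[OF price_range(1)[OF S] j] unfolding cs_sig_def by simp

lemma sig_bound:
  assumes S: "is_signal n S" and k: "k \<le> n" and i0: "1 \<le> i0" "i0 \<le> Suc k"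
  shows "(\<Sum>j=1..k. S j * cs_sig n v S j) \<le> (\<Sum>j=1..k. S j * v j) - v i0 * (\<Sum>j=i0..k. S j)"
proof -
  define p where "p = price_idx n v S"
  have p: "p \<in> {1..n}" using price_range[OF S] p_def by auto
  have S0: "\<And>j. 0 \<le> S j" using S by (simp add: is_signal_def)
  have mn: "\<And>j. j \<in> {1..k} \<Longrightarrow> S j * v j - S j * cs_sig n v S j = S j * min (v j) (v p)"
  proof -
    fix j assume j: "j \<in> {1..k}"
    then have jn: "j \<in> {1..n}" using k by auto
    show "S j * v j - S j * cs_sig n v S j = S j * min (v j) (v p)"
      using cs_eq[OF S jn] vle_iff[OF p jn] unfolding p_def[symmetric]
      by (auto simp: min_def algebra_simps)
  qed
  have diff: "(\<Sum>j=1..k. S j * v j) - (\<Sum>j=1..k. S j * cs_sig n v S j) = (\<Sum>j=1..k. S j * min (v j) (v p))"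
    using mn by (simp add: sum_subtractf[symmetric])
  have mnn: "\<And>j. j \<in> {1..k} \<Longrightarrow> 0 \<le> S j * min (v j) (v p)"
    using S0 vpos p k by (auto intro!: mult_nonneg_nonneg simp: less_imp_le)
  have "v i0 * (\<Sum>j=i0..k. S j) \<le> (\<Sum>j=1..k. S j * min (v j) (v p))"
  proof (cases "i0 = Suc k")
    case True
    then show ?thesis using mnn by (simp add: sum_nonneg del: atLeastAtMost_iff)
  next
    case False
    then have i0k: "i0 \<le> k" using i0 by simp
    have i0n: "i0 \<in> {1..n}" using i0 i0k k by auto
    show ?thesis
    proof (cases "i0 \<le> p")
      case True
      have "v i0 * (\<Sum>j=i0..k. S j) = (\<Sum>j=i0..k. S j * v i0)" by (simp add: sum_distrib_left mult.commute)
      also have "\<dots> \<le> (\<Sum>j=i0..k. S j * min (v j) (v p))"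
      proof (rule sum_mono)
        fix j assume j: "j \<in> {i0..k}"
        then have jn: "j \<in> {1..n}" using i0 k by auto
        have "v i0 \<le> v j" using vle_iff[OF i0n jn] j by auto
        moreover have "v i0 \<le> v p" using vle_iff[OF i0n p] True by auto
        ultimately show "S j * v i0 \<le> S j * min (v j) (v p)" using S0[of j] by (simp add: mult_left_mono)
      qed
      also have "\<dots> \<le> (\<Sum>j=1..k. S j * min (v j) (v p))"
        using mnn i0 by (intro sum_mono2) auto
      finally show ?thesis .
    next
      case False
      define T where "T = (\<Sum>j=Suc k..n. S j)"
      have T0: "0 \<le> T" unfolding T_def using S0 by (simp add: sum_nonneg)
      have pk: "p \<le> Suc k" using False i0k by simp
      have e1: "(\<Sum>j=i0..n. S j) = (\<Sum>j=i0..k. S j) + T" unfolding T_def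
        using sum_split_at[of i0 k n] i0 k by simp
      have e2: "(\<Sum>j=p..n. S j) = (\<Sum>j=p..k. S j) + T" unfolding T_def
        using sum_split_at[of p k n] pk k by simp
      have rb: "v i0 * (\<Sum>j=i0..n. S j) \<le> v p * (\<Sum>j=p..n. S j)"
        using rev_bound[OF S i0n] p_def by simp
      have vp: "v p \<le> v i0" using vle_iff[OF p i0n] False by auto
      have "v p * T \<le> v i0 * T" using vp T0 by (simp add: mult_right_mono)
      then have "v i0 * (\<Sum>j=i0..k. S j) \<le> v p * (\<Sum>j=p..k. S j)"
        using rb e1 e2 by (simp add: algebra_simps)
      also have "\<dots> = (\<Sum>j=p..k. S j * min (v j) (v p))"
      proof -
        have "\<And>j. j \<in> {p..k} \<Longrightarrow> min (v j) (v p) = v p"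
        proof -
          fix j assume j: "j \<in> {p..k}"
          then have jn: "j \<in> {1..n}" using p k by auto
          show "min (v j) (v p) = v p" using vle_iff[OF p jn] j by (auto simp: min_def)
        qed
        then show ?thesis by (simp add: sum_distrib_left mult.commute)
      qed
      also have "\<dots> \<le> (\<Sum>j=1..k. S j * min (v j) (v p))"
        using mnn p by (intro sum_mono2) auto
      finally show ?thesis .
    qed
  qed
  then show ?thesis using diff by simp
qed


lemma fcs: "i \<in> {1..n} \<Longrightarrow> f i * cs_scheme n v f Z i = sum_list (map (\<lambda>(S,\<gamma>). \<gamma> * (S i * cs_sig n v S i)) Z)"
proof -
  assume i: "i \<in> {1..n}"
  have "f i \<noteq> 0" using f_pos[OF i] by simp
  then show ?thesis unfolding cs_scheme_def
    by (induction Z) (auto simp: distrib_left field_simps)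
qed

lemma prefix_list: "k \<le> n \<Longrightarrow> (\<Sum>i=1..k. f i * cs_scheme n v f Z i)
   = sum_list (map (\<lambda>(S,\<gamma>). \<Sum>i=1..k. \<gamma> * (S i * cs_sig n v S i)) Z)"
proof -
  assume k: "k \<le> n"
  have "(\<Sum>i=1..k. f i * cs_scheme n v f Z i) = (\<Sum>i=1..k. sum_list (map (\<lambda>(S,\<gamma>). \<gamma> * (S i * cs_sig n v S i)) Z))"
    using k by (intro sum.cong) (auto simp: fcs)
  also have "\<dots> = sum_list (map (\<lambda>(S,\<gamma>). \<Sum>i=1..k. \<gamma> * (S i * cs_sig n v S i)) Z)"
    by (simp add: sum_list_sum_swap split_def)
  finally show ?thesis .
qed

lemma scheme_ub:
  assumes Z: "is_scheme n f Z" and k: "k \<le> n" and i0: "1 \<le> i0" "i0 \<le> Suc k"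
  shows "(\<Sum>i=1..k. f i * cs_scheme n v f Z i) \<le> (\<Sum>j=1..k. f j * v j) - v i0 * (\<Sum>j=i0..k. f j)"
proof -
  have "(\<Sum>i=1..k. f i * cs_scheme n v f Z i) = sum_list (map (\<lambda>(S,\<gamma>). \<Sum>i=1..k. \<gamma> * (S i * cs_sig n v S i)) Z)"
    using prefix_list[OF k] .
  also have "\<dots> \<le> sum_list (map (\<lambda>(S,\<gamma>). \<gamma> * ((\<Sum>j\<in>{1..k}. S j * v j) - v i0 * (\<Sum>j\<in>{i0..k}. S j))) Z)"
  proof (rule sum_list_mono)
    fix p assume p: "p \<in> set Z"
    obtain S \<gamma> where pe: "p = (S, \<gamma>)" by (cases p)
    have S: "is_signal n S" and g: "0 \<le> \<gamma>" using Z p pe unfolding is_scheme_def by auto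
    have "(\<Sum>i=1..k. \<gamma> * (S i * cs_sig n v S i)) = \<gamma> * (\<Sum>i=1..k. S i * cs_sig n v S i)"
      by (simp add: sum_distrib_left)
    also have "\<dots> \<le> \<gamma> * ((\<Sum>j\<in>{1..k}. S j * v j) - v i0 * (\<Sum>j\<in>{i0..k}. S j))"
      using sig_bound[OF S k i0] g by (intro mult_left_mono) auto
    finally show "(case p of (S,\<gamma>) \<Rightarrow> \<Sum>i=1..k. \<gamma> * (S i * cs_sig n v S i))
        \<le> (case p of (S,\<gamma>) \<Rightarrow> \<gamma> * ((\<Sum>j\<in>{1..k}. S j * v j) - v i0 * (\<Sum>j\<in>{i0..k}. S j)))"
      using pe by simp
  qed
  also have "\<dots> = (\<Sum>j\<in>{1..k}. v j * sum_list (map (\<lambda>(S,\<gamma>). \<gamma> * S j) Z)) - v i0 * (\<Sum>j\<in>{i0..k}. sum_list (map (\<lambda>(S,\<gamma>). \<gamma> * S j) Z))"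
    by (rule lin_swap)
  also have "\<dots> = (\<Sum>j=1..k. f j * v j) - v i0 * (\<Sum>j=i0..k. f j)"
  proof -
    have w: "\<And>j. j \<in> {1..n} \<Longrightarrow> sum_list (map (\<lambda>(S,\<gamma>). \<gamma> * S j) Z) = f j"
      using Z unfolding is_scheme_def by auto
    have "(\<Sum>j\<in>{1..k}. v j * sum_list (map (\<lambda>(S,\<gamma>). \<gamma> * S j) Z)) = (\<Sum>j=1..k. f j * v j)"
      using k w by (intro sum.cong) auto
    moreover have "(\<Sum>j\<in>{i0..k}. sum_list (map (\<lambda>(S,\<gamma>). \<gamma> * S j) Z)) = (\<Sum>j=i0..k. f j)"
      using k w i0 by (intro sum.cong) auto
    ultimately show ?thesis by simp
  qed
  finally show ?thesis .
qed

lemma eqrev_price: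
  assumes sl: "1 \<le> s" "s < l" "l \<le> n"
  shows "price_idx n v (eq_rev_sig v s l) = s"
proof -
  define S where "S = eq_rev_sig v s l"
  define a where "a = 1 - v s / v l"
  define b where "b = v s / v l"
  have sn: "s \<in> {1..n}" and ln: "l \<in> {1..n}" using sl by auto
  have vs: "0 < v s" using vpos[OF sn] .
  have vsl: "v s < v l" using vlt[OF sn ln sl(2)] .
  have vl: "0 < v l" using vs vsl by simp
  have a: "0 < a" using vsl vl by (simp add: a_def field_simps)
  have b: "0 < b" using vs vl by (simp add: b_def)
  have Sf: "\<And>j. S j = (if j = s then a else 0) + (if j = l then b else 0)"
    using sl by (simp add: S_def eq_rev_sig_def a_def b_def)
  have supp: "supp_sig n S = {s, l}"
    using sn ln a b sl by (auto simp: supp_sig_def Sf)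
  have Gs: "G_sig n v S (v s) = 1"
  proof -
    have "G_sig n v S (v s) = (\<Sum>j=s..n. S j)" using G_eq[OF sn] .
    also have "\<dots> = a + b" using sl by (simp add: Sf sum.distrib)
    also have "\<dots> = 1" by (simp add: a_def b_def)
    finally show ?thesis .
  qed
  have Gl: "G_sig n v S (v l) = b"
  proof -
    have "G_sig n v S (v l) = (\<Sum>j=l..n. S j)" using G_eq[OF ln] .
    also have "\<dots> = b" using sl by (simp add: Sf sum.distrib)
    finally show ?thesis .
  qed
  have rl: "v l * b = v s" using vl by (simp add: b_def)
  show ?thesis unfolding S_def[symmetric] price_idx_def
  proof (rule Least_equality)
    show "s \<in> supp_sig n S \<and> (\<forall>j\<in>supp_sig n S. v j * G_sig n v S (v j) \<le> v s * G_sig n v S (v s))"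
      using supp Gs Gl rl by auto
  next
    fix y assume "y \<in> supp_sig n S \<and> (\<forall>j\<in>supp_sig n S. v j * G_sig n v S (v j) \<le> v y * G_sig n v S (v y))"
    then show "s \<le> y" using supp sl by auto
  qed
qed

lemma eqrev_contrib:
  assumes sl: "1 \<le> s" "s < l" "l \<le> n"
  shows "(\<Sum>i=1..k. \<gamma> * (eq_rev_sig v s l i * cs_sig n v (eq_rev_sig v s l) i))
     = (if l \<le> k then \<gamma> * (v s / v l) * (v l - v s) else 0)"
proof -
  have sn: "s \<in> {1..n}" and ln: "l \<in> {1..n}" using sl by auto
  have vsl: "v s < v l" using vlt[OF sn ln sl(2)] .
  have p: "price_idx n v (eq_rev_sig v s l) = s" using eqrev_price[OF sl] .
  have t: "\<And>i. \<gamma> * (eq_rev_sig v s l i * cs_sig n v (eq_rev_sig v s l) i)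
      = (if i = l then \<gamma> * (v s / v l) * (v l - v s) else 0)"
    unfolding cs_sig_def p using sl vsl by (auto simp: eq_rev_sig_def)
  show ?thesis unfolding t using sl by simp
qed

lemma single_price: "i \<in> {1..n} \<Longrightarrow> price_idx n v (singleton_sig i) = i"
proof -
  assume i: "i \<in> {1..n}"
  have supp: "supp_sig n (singleton_sig i) = {i}" using i by (auto simp: supp_sig_def singleton_sig_def)
  show ?thesis unfolding price_idx_def supp
    by (rule Least_equality) auto
qed

lemma single_contrib: assumes i0: "i0 \<in> {1..n}" shows
   "(\<Sum>i=1..k. \<gamma> * (singleton_sig i0 i * cs_sig n v (singleton_sig i0) i)) = 0"
proof -
  have p: "price_idx n v (singleton_sig i0) = i0" using single_price[OF i0] .
  show ?thesis unfolding cs_sig_def p by (intro sum.neutral) (auto simp: singleton_sig_def)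
qed

lemma Z0_prefix:
  assumes valid: "\<forall>((s,l),\<gamma>)\<in>set (split_and_match_binary n v f). 1 \<le> s \<and> s < l \<and> l \<le> n"
    and k: "k \<le> n"
  shows "(\<Sum>i=1..k. f i * cs_scheme n v f (split_and_match n v f) i) = CSk v k (split_and_match_binary n v f)"
proof -
  define L where "L = split_and_match_binary n v f"
  have valid': "\<forall>((s,l),\<gamma>)\<in>set L. 1 \<le> s \<and> s < l \<and> l \<le> n" using valid L_def by simp
  have "(\<Sum>i=1..k. f i * cs_scheme n v f (split_and_match n v f) i)
     = sum_list (map (\<lambda>(S,\<gamma>). \<Sum>i=1..k. \<gamma> * (S i * cs_sig n v S i)) (split_and_match n v f))"
    using prefix_list[OF k] .
  also have "\<dots> = sum_list (map (\<lambda>((s,l),\<gamma>). if l \<le> k then \<gamma> * (v s / v l) * (v l - v s) else 0) L)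
       + sum_list (map (\<lambda>i. 0) [1..<n+1])"
  proof -
    have e1: "map ((\<lambda>(S,\<gamma>). \<Sum>i=1..k. \<gamma> * (S i * cs_sig n v S i)) \<circ> (\<lambda>((s, l), \<gamma>). (eq_rev_sig v s l, \<gamma>))) L
       = map (\<lambda>((s,l),\<gamma>). if l \<le> k then \<gamma> * (v s / v l) * (v l - v s) else 0) L"
    proof (intro map_cong refl)
      fix x assume x: "x \<in> set L"
      obtain s l \<gamma> where xe: "x = ((s,l),\<gamma>)" by (metis prod.collapse)
      have sl: "1 \<le> s" "s < l" "l \<le> n" using valid' x xe by auto
      show "((\<lambda>(S,\<gamma>). \<Sum>i=1..k. \<gamma> * (S i * cs_sig n v S i)) \<circ> (\<lambda>((s, l), \<gamma>). (eq_rev_sig v s l, \<gamma>))) x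
         = (\<lambda>((s,l),\<gamma>). if l \<le> k then \<gamma> * (v s / v l) * (v l - v s) else 0) x"
        using eqrev_contrib[OF sl, where k=k and \<gamma>=\<gamma>] xe by simp
    qed
    have e2: "map ((\<lambda>(S,\<gamma>). \<Sum>i=1..k. \<gamma> * (S i * cs_sig n v S i)) \<circ>
        (\<lambda>i. (singleton_sig i, f i - sum_list (map (\<lambda>((s, l), \<gamma>). \<gamma> * eq_rev_sig v s l i) L)))) [1..<n+1]
       = map (\<lambda>i. 0) [1..<n+1]"
    proof (intro map_cong refl)
      fix x assume x: "x \<in> set [1..<n+1]"
      then have xn: "x \<in> {1..n}" by auto
      show "((\<lambda>(S,\<gamma>). \<Sum>i=1..k. \<gamma> * (S i * cs_sig n v S i)) \<circ>
        (\<lambda>i. (singleton_sig i, f i - sum_list (map (\<lambda>((s, l), \<gamma>). \<gamma> * eq_rev_sig v s l i) L)))) x = 0"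
        using single_contrib[OF xn] by simp
    qed
    show ?thesis
      unfolding split_and_match_def Let_def L_def[symmetric]
      by (simp only: map_append sum_list_append map_map e1 e2)
  qed
  finally show ?thesis by (simp add: CSk_def L_def)
qed


lemma sm_step_ok:
  assumes I: "sm_inv n v f (g,t,L)" and C: "sm_cont n (g,t,L)"
  shows "sm_inv n v f (sm_step n v (g,t,L)) \<and> sm_mu n (sm_step n v (g,t,L)) < sm_mu n (g,t,L)"
proof -
  note H = I[unfolded sm_inv_def prod.case]
  note nn = H[THEN conjunct1]
  note geq = H[THEN conjunct2, THEN conjunct1]
  note teq = H[THEN conjunct2, THEN conjunct2, THEN conjunct1]
  note val = H[THEN conjunct2, THEN conjunct2, THEN conjunct2, THEN conjunct1]
  note J1 = H[THEN conjunct2, THEN conjunct2, THEN conjunct2, THEN conjunct2, THEN conjunct1]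
  note J2 = H[THEN conjunct2, THEN conjunct2, THEN conjunct2, THEN conjunct2, THEN conjunct2, THEN conjunct1]
  note J3 = H[THEN conjunct2, THEN conjunct2, THEN conjunct2, THEN conjunct2, THEN conjunct2, THEN conjunct2]
  have ex_s: "\<exists>s. 1 \<le> s \<and> s \<le> n \<and> g s > 0" and ex_l: "\<exists>l. sm_s n g < l \<and> l \<le> n \<and> t l > 0"
    using C unfolding sm_cont_def by auto
  define s where "s = sm_s n g"
  have s: "1 \<le> s" "s \<le> n" "g s > 0" using LeastI_ex[OF ex_s] unfolding s_def sm_s_def by auto
  have below_s: "\<And>i. 1 \<le> i \<Longrightarrow> i < s \<Longrightarrow> g i = 0"
  proof -
    fix i assume i: "1 \<le> i" "i < s"
    have "\<not> (1 \<le> i \<and> i \<le> n \<and> g i > 0)" using not_less_Least[of i "\<lambda>s. 1 \<le> s \<and> s \<le> n \<and> g s > 0"] i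
      unfolding s_def sm_s_def by auto
    moreover have "i \<in> {1..n}" using i s by auto
    then have "0 \<le> g i" using nn by blast
    ultimately show "g i = 0" using i s by auto
  qed
  have ex_l': "\<exists>l. s < l \<and> l \<le> n \<and> t l > 0" using ex_l s_def by simp
  define l where "l = sm_l n s t"
  have l: "s < l" "l \<le> n" "t l > 0" using LeastI_ex[OF ex_l'] unfolding l_def sm_l_def by auto
  have between: "\<And>j. s < j \<Longrightarrow> j < l \<Longrightarrow> t j = 0"
  proof -
    fix j assume j: "s < j" "j < l"
    have "\<not> (s < j \<and> j \<le> n \<and> t j > 0)" using not_less_Least[of j "\<lambda>l. s < l \<and> l \<le> n \<and> t l > 0"] j
      unfolding l_def sm_l_def by auto
    moreover have "j \<in> {1..n}" using j s l by auto
    then have "0 \<le> t j" using nn by blast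
    ultimately show "t j = 0" using j l by auto
  qed
  have sn: "s \<in> {1..n}" and ln: "l \<in> {1..n}" using s l by auto
  have vs: "0 < v s" using vpos[OF sn] .
  have vsl: "v s < v l" using vlt[OF sn ln l(1)] .
  define r where "r = v s / v l"
  have r: "0 < r" "r < 1" using vs vsl by (auto simp: r_def field_simps)
  define \<gamma> where "\<gamma> = min (g s / (1 - r)) (t l / r)"
  have step: "sm_step n v (g,t,L) = (g(s := g s - \<gamma> * (1 - r)), t(l := t l - \<gamma> * r), L @ [((s,l),\<gamma>)])"
    by (simp add: sm_step_def Let_def s_def l_def r_def \<gamma>_def)
  have g0: "0 \<le> \<gamma>" using s l r nn by (auto simp: \<gamma>_def)
  have gs': "0 \<le> g s - \<gamma> * (1 - r)"
  proof -
    have "\<gamma> \<le> g s / (1 - r)" by (simp add: \<gamma>_def)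
    then have "\<gamma> * (1 - r) \<le> g s" using r by (simp add: pos_le_divide_eq)
    then show ?thesis by simp
  qed
  have tl': "0 \<le> t l - \<gamma> * r"
  proof -
    have "\<gamma> \<le> t l / r" by (simp add: \<gamma>_def)
    then have "\<gamma> * r \<le> t l" using r by (simp add: pos_le_divide_eq)
    then show ?thesis by simp
  qed
  define g' where "g' = g(s := g s - \<gamma> * (1 - r))"
  define t' where "t' = t(l := t l - \<gamma> * r)"
  define L' where "L' = L @ [((s,l),\<gamma>)]"
  have inv': "sm_inv n v f (g', t', L')"
    unfolding sm_inv_def prod.case
  proof (intro conjI)
    show "\<forall>i\<in>{1..n}. 0 \<le> g' i \<and> 0 \<le> t' i" using nn gs' tl' by (auto simp: g'_def t'_def)
    show "\<forall>i. g' i = f i / 2 - ug v L' i"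
      using geq by (auto simp: g'_def L'_def ug_def r_def)
    show "\<forall>i. t' i = f i / 2 - ut v L' i"
      using teq by (auto simp: t'_def L'_def ut_def r_def)
    show "\<forall>s l \<gamma>. ((s,l),\<gamma>) \<in> set L' \<longrightarrow> 1 \<le> s \<and> s < l \<and> l \<le> n \<and> 0 \<le> \<gamma>"
      using val s l g0 by (auto simp: L'_def)
    show "\<forall>s1 l1 \<gamma>1 i. ((s1,l1),\<gamma>1) \<in> set L' \<longrightarrow> 1 \<le> i \<longrightarrow> i < s1 \<longrightarrow> g' i = 0"
    proof (intro allI impI)
      fix s1 l1 \<gamma>1 i assume p: "((s1,l1),\<gamma>1) \<in> set L'" and i: "1 \<le> i" "i < s1"
      show "g' i = 0"
      proof (cases "((s1,l1),\<gamma>1) \<in> set L")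
        case True
        then have "g i = 0" using J1 i by blast
        then have "i \<noteq> s" using s by auto
        then show ?thesis using \<open>g i = 0\<close> by (simp add: g'_def)
      next
        case False
        then have "s1 = s" using p by (auto simp: L'_def)
        then show ?thesis using below_s i by (simp add: g'_def)
      qed
    qed
    show "\<forall>s1 l1 \<gamma>1 j. ((s1,l1),\<gamma>1) \<in> set L' \<longrightarrow> s1 < j \<longrightarrow> j < l1 \<longrightarrow> t' j = 0"
    proof (intro allI impI)
      fix s1 l1 \<gamma>1 j assume p: "((s1,l1),\<gamma>1) \<in> set L'" and j: "s1 < j" "j < l1"
      show "t' j = 0"
      proof (cases "((s1,l1),\<gamma>1) \<in> set L")
        case True
        then have "t j = 0" using J2 j by blast
        then have "j \<noteq> l" using l by auto
        then show ?thesis using \<open>t j = 0\<close> by (simp add: t'_def)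
      next
        case False
        then have "s1 = s" "l1 = l" using p by (auto simp: L'_def)
        then show ?thesis using between j by (simp add: t'_def)
      qed
    qed
    show "\<forall>s1 l1 \<gamma>1 s2 l2 \<gamma>2. ((s1,l1),\<gamma>1) \<in> set L' \<longrightarrow> ((s2,l2),\<gamma>2) \<in> set L' \<longrightarrow> s1 < s2 \<longrightarrow> l1 \<le> l2"
    proof (intro allI impI)
      fix s1 l1 \<gamma>1 s2 l2 \<gamma>2
      assume p1: "((s1,l1),\<gamma>1) \<in> set L'" and p2: "((s2,l2),\<gamma>2) \<in> set L'" and lt: "s1 < s2"
      have new_old: "l1 \<le> l" if "((s1,l1),\<gamma>1) \<in> set L" "s1 < s" for s1 l1 \<gamma>1
      proof (rule ccontr)
        assume "\<not> l1 \<le> l"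
        then have "l < l1" by simp
        moreover have "s1 < l" using that(2) l(1) by simp
        ultimately have "t l = 0" using J2[rule_format, OF that(1)] by blast
        then show False using l by simp
      qed
      have old_new: "False" if "((s2,l2),\<gamma>2) \<in> set L" "s < s2" for s2 l2 \<gamma>2
      proof -
        have "g s = 0" using J1 that s by blast
        then show False using s by simp
      qed
      show "l1 \<le> l2"
      proof (cases "((s1,l1),\<gamma>1) \<in> set L")
        case T1: True
        show ?thesis
        proof (cases "((s2,l2),\<gamma>2) \<in> set L")
          case True then show ?thesis using J3 T1 lt by blast
        next
          case False
          then have "s2 = s" "l2 = l" using p2 by (auto simp: L'_def)
          then show ?thesis using new_old[OF T1] lt by simp
        qed
      next
        case F1: False
        then have e1: "s1 = s" "l1 = l" using p1 by (auto simp: L'_def)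
        show ?thesis
        proof (cases "((s2,l2),\<gamma>2) \<in> set L")
          case True then show ?thesis using old_new[OF True] lt e1 by simp
        next
          case False
          then have "s2 = s" using p2 by (auto simp: L'_def)
          then show ?thesis using lt e1 by simp
        qed
      qed
    qed
  qed
  have dg: "0 \<le> \<gamma> * (1 - r)" using g0 r by simp
  have dt: "0 \<le> \<gamma> * r" using g0 r by simp
  have Ag: "{i\<in>{1..n}. 0 < g' i} \<subseteq> {i\<in>{1..n}. 0 < g i}"
  proof
    fix i assume "i \<in> {i\<in>{1..n}. 0 < g' i}"
    then show "i \<in> {i\<in>{1..n}. 0 < g i}" using dg by (cases "i = s") (auto simp: g'_def)
  qed
  have At: "{i\<in>{1..n}. 0 < t' i} \<subseteq> {i\<in>{1..n}. 0 < t i}"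
  proof
    fix i assume "i \<in> {i\<in>{1..n}. 0 < t' i}"
    then show "i \<in> {i\<in>{1..n}. 0 < t i}" using dt by (cases "i = l") (auto simp: t'_def)
  qed
  have cg: "card {i\<in>{1..n}. 0 < g' i} \<le> card {i\<in>{1..n}. 0 < g i}" using Ag by (intro card_mono) auto
  have ct: "card {i\<in>{1..n}. 0 < t' i} \<le> card {i\<in>{1..n}. 0 < t i}" using At by (intro card_mono) auto
  have strict: "card {i\<in>{1..n}. 0 < g' i} < card {i\<in>{1..n}. 0 < g i} \<or> card {i\<in>{1..n}. 0 < t' i} < card {i\<in>{1..n}. 0 < t i}"
  proof (cases "g s / (1 - r) \<le> t l / r")
    case True
    then have "\<gamma> = g s / (1 - r)" by (simp add: \<gamma>_def)
    then have "\<gamma> * (1 - r) = g s" using r by simp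
    then have "g' s = 0" by (simp add: g'_def)
    then have "s \<notin> {i\<in>{1..n}. 0 < g' i}" by simp
    moreover have "s \<in> {i\<in>{1..n}. 0 < g i}" using s sn by simp
    ultimately have ps: "{i\<in>{1..n}. 0 < g' i} \<subset> {i\<in>{1..n}. 0 < g i}" using Ag by blast
    have "finite {i\<in>{1..n}. 0 < g i}" by simp
    then show ?thesis using psubset_card_mono[OF _ ps] by blast
  next
    case False
    then have "\<gamma> = t l / r" by (simp add: \<gamma>_def)
    then have "\<gamma> * r = t l" using r by simp
    then have "t' l = 0" by (simp add: t'_def)
    then have "l \<notin> {i\<in>{1..n}. 0 < t' i}" by simp
    moreover have "l \<in> {i\<in>{1..n}. 0 < t i}" using l ln by simp
    ultimately have ps: "{i\<in>{1..n}. 0 < t' i} \<subset> {i\<in>{1..n}. 0 < t i}" using At by blast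
    have "finite {i\<in>{1..n}. 0 < t i}" by simp
    then show ?thesis using psubset_card_mono[OF _ ps] by blast
  qed
  have mu: "sm_mu n (g', t', L') < sm_mu n (g,t,L)" unfolding sm_mu_def prod.case using cg ct strict by linarith
  show ?thesis unfolding step g'_def[symmetric] t'_def[symmetric] L'_def[symmetric]
    using inv' mu by (rule conjI)
qed

lemma sm_init: "sm_inv n v f (\<lambda>i. f i / 2, \<lambda>i. f i / 2, [])"
  using f_pos by (auto simp: sm_inv_def ug_def ut_def less_imp_le)

lemma sm_run: "\<exists>g t. sm_inv n v f (g, t, split_and_match_binary n v f) \<and> \<not> sm_cont n (g, t, split_and_match_binary n v f)"
proof -
  have step: "\<And>st. sm_inv n v f st \<Longrightarrow> sm_cont n st \<Longrightarrow> sm_inv n v f (sm_step n v st) \<and> sm_mu n (sm_step n v st) < sm_mu n st"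
  proof -
    fix st assume a: "sm_inv n v f st" "sm_cont n st"
    obtain g t L where e: "st = (g,t,L)" by (cases st)
    show "sm_inv n v f (sm_step n v st) \<and> sm_mu n (sm_step n v st) < sm_mu n st"
      using sm_step_ok[of g t L] a unfolding e by blast
  qed
  obtain st where st: "while_option (sm_cont n) (sm_step n v) (\<lambda>i. f i / 2, \<lambda>i. f i / 2, []) = Some st"
    using measure_while_option_Some[of "sm_inv n v f" "sm_cont n" "sm_step n v" "sm_mu n", OF step sm_init] by blast
  have step1: "\<And>st. sm_inv n v f st \<Longrightarrow> sm_cont n st \<Longrightarrow> sm_inv n v f (sm_step n v st)"
    using step by blast
  have I: "sm_inv n v f st" by (rule while_option_rule[OF step1 st sm_init])
  have NC: "\<not> sm_cont n st" using while_option_stop[OF st] .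
  obtain g t L where e: "st = (g,t,L)" by (cases st)
  have "split_and_match_binary n v f = L" unfolding split_and_match_binary_def st e by simp
  then show ?thesis using I NC e by blast
qed

lemma sm_final:
  assumes I: "sm_inv n v f (g,t,L)" and NC: "\<not> sm_cont n (g,t,L)" and k: "k \<le> n"
  shows "\<exists>i0. 1 \<le> i0 \<and> i0 \<le> Suc k \<and> (\<forall>j. 1 \<le> j \<and> j < i0 \<longrightarrow> f j / 2 = ugk v k L j)
     \<and> (\<forall>j. i0 < j \<and> j \<le> k \<longrightarrow> f j / 2 = ut v L j)
     \<and> (\<forall>s l \<gamma>. ((s,l),\<gamma>) \<in> set L \<longrightarrow> i0 < l \<longrightarrow> l \<le> k \<longrightarrow> s \<le> i0)"
proof -
  note H = I[unfolded sm_inv_def prod.case]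
  note nn = H[THEN conjunct1]
  note geq = H[THEN conjunct2, THEN conjunct1]
  note teq = H[THEN conjunct2, THEN conjunct2, THEN conjunct1]
  note val = H[THEN conjunct2, THEN conjunct2, THEN conjunct2, THEN conjunct1]
  note J1 = H[THEN conjunct2, THEN conjunct2, THEN conjunct2, THEN conjunct2, THEN conjunct1]
  note J2 = H[THEN conjunct2, THEN conjunct2, THEN conjunct2, THEN conjunct2, THEN conjunct2, THEN conjunct1]
  note J3 = H[THEN conjunct2, THEN conjunct2, THEN conjunct2, THEN conjunct2, THEN conjunct2, THEN conjunct2]
  have ugk_eq: "ug v L j = ugk v k L j" if h: "\<forall>s l \<gamma>. ((s,l),\<gamma>) \<in> set L \<longrightarrow> s = j \<longrightarrow> l \<le> k" for j
    unfolding ug_def ugk_def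
  proof (intro arg_cong[where f=sum_list] map_cong refl)
    fix x assume x: "x \<in> set L"
    obtain s l \<gamma> where xe: "x = ((s,l),\<gamma>)" by (metis prod.collapse)
    show "(\<lambda>((s,l),\<gamma>). if s = j then \<gamma> * (1 - v s / v l) else 0) x
        = (\<lambda>((s,l),\<gamma>). if s = j \<and> l \<le> k then \<gamma> * (1 - v s / v l) else 0) x"
      using h x xe by auto
  qed
  show ?thesis
  proof (cases "\<exists>s l \<gamma>. ((s,l),\<gamma>) \<in> set L \<and> k < l")
    case True
    define CS where "CS = {s. \<exists>l \<gamma>. ((s,l),\<gamma>) \<in> set L \<and> k < l}"
    have "CS \<subseteq> {..n}" unfolding CS_def using val by fastforce
    then have finCS: "finite CS" by (rule finite_subset) simp
    have neCS: "CS \<noteq> {}" using True unfolding CS_def by blast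
    define s0 where "s0 = Min CS"
    have "s0 \<in> CS" using Min_in[OF finCS neCS] s0_def by simp
    then obtain l0 \<gamma>0 where p0: "((s0,l0),\<gamma>0) \<in> set L" "k < l0" unfolding CS_def by blast
    have minCS: "\<And>s. s \<in> CS \<Longrightarrow> s0 \<le> s" using Min_le[OF finCS] s0_def by simp
    have s0ge: "1 \<le> s0" using val p0 by blast
    define i0 where "i0 = min s0 (Suc k)"
    show ?thesis
    proof (rule exI[of _ i0], intro conjI allI impI)
      show "1 \<le> i0" using s0ge by (simp add: i0_def)
      show "i0 \<le> Suc k" by (simp add: i0_def)
    next
      fix j assume j: "1 \<le> j \<and> j < i0"
      then have js: "j < s0" by (simp add: i0_def)
      have gj: "g j = 0" using J1 p0(1) j js by blast
      have h: "\<forall>s l \<gamma>. ((s,l),\<gamma>) \<in> set L \<longrightarrow> s = j \<longrightarrow> l \<le> k"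
      proof (intro allI impI)
        fix s l \<gamma> assume "((s,l),\<gamma>) \<in> set L" "s = j"
        show "l \<le> k"
        proof (rule ccontr)
          assume "\<not> l \<le> k"
          then have "j \<in> CS" unfolding CS_def using \<open>((s,l),\<gamma>) \<in> set L\<close> \<open>s = j\<close> by force
          then show False using minCS js by force
        qed
      qed
      show "f j / 2 = ugk v k L j" using ugk_eq[OF h] geq gj by (metis diff_eq_eq add_0)
    next
      fix j assume j: "i0 < j \<and> j \<le> k"
      then have "i0 = s0" by (auto simp: i0_def)
      then have "t j = 0" using J2 p0 j by (metis order_le_less_trans)
      then show "f j / 2 = ut v L j" using teq by (metis diff_eq_eq add_0)
    next
      fix s l \<gamma> assume p: "((s,l),\<gamma>) \<in> set L" and l: "i0 < l" "l \<le> k"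
      then have i0s: "i0 = s0" by (auto simp: i0_def)
      show "s \<le> i0"
      proof (rule ccontr)
        assume "\<not> s \<le> i0"
        then have "l0 \<le> l" using J3 p0(1) p i0s by (meson not_le)
        then show False using l p0 by simp
      qed
    qed
  next
    case False
    have allk: "\<forall>s l \<gamma>. ((s,l),\<gamma>) \<in> set L \<longrightarrow> s = j \<longrightarrow> l \<le> k" for j using False by (meson not_le)
    have ugk_all: "\<And>j. ug v L j = ugk v k L j" using ugk_eq allk by blast
    show ?thesis
    proof (cases "\<exists>s. 1 \<le> s \<and> s \<le> n \<and> g s > 0")
      case False
      show ?thesis
      proof (rule exI[of _ "Suc k"], intro conjI allI impI)
        fix j assume j: "1 \<le> j \<and> j < Suc k"
        then have "j \<in> {1..n}" using k by auto
        then have "g j = 0" using nn False by force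
        then show "f j / 2 = ugk v k L j" using geq ugk_all by (metis diff_eq_eq add_0)
      qed auto
    next
      case True
      define ss where "ss = sm_s n g"
      have ss: "1 \<le> ss" "ss \<le> n" "g ss > 0" using LeastI_ex[OF True] unfolding ss_def sm_s_def by auto
      have below: "\<And>i. 1 \<le> i \<Longrightarrow> i < ss \<Longrightarrow> g i = 0"
      proof -
        fix i assume i: "1 \<le> i" "i < ss"
        have "\<not> (1 \<le> i \<and> i \<le> n \<and> g i > 0)" using not_less_Least[of i "\<lambda>s. 1 \<le> s \<and> s \<le> n \<and> g s > 0"] i
          unfolding ss_def sm_s_def by auto
        then show "g i = 0" using nn i ss by force
      qed
      have noT: "\<not> (\<exists>l. ss < l \<and> l \<le> n \<and> t l > 0)" using NC True unfolding sm_cont_def ss_def by auto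
      define i0 where "i0 = min ss (Suc k)"
      show ?thesis
      proof (rule exI[of _ i0], intro conjI allI impI)
        show "1 \<le> i0" using ss by (simp add: i0_def)
        show "i0 \<le> Suc k" by (simp add: i0_def)
      next
        fix j assume j: "1 \<le> j \<and> j < i0"
        then have "g j = 0" using below by (simp add: i0_def)
        then show "f j / 2 = ugk v k L j" using geq ugk_all by (metis diff_eq_eq add_0)
      next
        fix j assume j: "i0 < j \<and> j \<le> k"
        then have "i0 = ss" by (auto simp: i0_def)
        then have jn: "j \<in> {1..n}" and sj: "ss < j" using j k ss by auto
        have "0 \<le> t j" using nn jn by blast
        moreover have "\<not> 0 < t j" using noT sj jn by (meson atLeastAtMost_iff)
        ultimately have "t j = 0" by simp
        then show "f j / 2 = ut v L j" using teq by (metis diff_eq_eq add_0)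
      next
        fix s l \<gamma> assume p: "((s,l),\<gamma>) \<in> set L" and l: "i0 < l" "l \<le> k"
        then have i0s: "i0 = ss" by (auto simp: i0_def)
        show "s \<le> i0"
        proof (rule ccontr)
          assume "\<not> s \<le> i0"
          then have "g ss = 0" using J1 p i0s ss by (meson not_le)
          then show False using ss by simp
        qed
      qed
    qed
  qed
qed

lemma key_alg:
  assumes val: "\<forall>s l \<gamma>. ((s,l),\<gamma>) \<in> set L \<longrightarrow> 1 \<le> s \<and> s < l \<and> l \<le> n \<and> 0 \<le> \<gamma>"
    and k: "k \<le> n" and i0: "1 \<le> i0" "i0 \<le> Suc k"
    and P1: "\<forall>j. 1 \<le> j \<and> j < i0 \<longrightarrow> f j / 2 = ugk v k L j"
    and P2: "\<forall>j. i0 < j \<and> j \<le> k \<longrightarrow> f j / 2 = ut v L j"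
    and P3: "\<forall>s l \<gamma>. ((s,l),\<gamma>) \<in> set L \<longrightarrow> i0 < l \<longrightarrow> l \<le> k \<longrightarrow> s \<le> i0"
  shows "(\<Sum>j=1..k. f j * v j) - v i0 * (\<Sum>j=i0..k. f j) \<le> 4 * CSk v k L"
proof -
  have split: "(\<Sum>j=1..k. f j * v j) - v i0 * (\<Sum>j=i0..k. f j)
      = (\<Sum>j\<in>{1..<i0}. f j * v j) + (\<Sum>j\<in>{i0<..k}. f j * (v j - v i0))"
  proof -
    have u: "{1..k} = {1..<i0} \<union> {i0..k}" using i0 by auto
    have "(\<Sum>j=1..k. f j * v j) = (\<Sum>j\<in>{1..<i0}. f j * v j) + (\<Sum>j=i0..k. f j * v j)"
      unfolding u by (rule sum.union_disjoint) auto
    moreover have "(\<Sum>j=i0..k. f j * v j) - v i0 * (\<Sum>j=i0..k. f j) = (\<Sum>j=i0..k. f j * (v j - v i0))"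
      by (simp add: sum_distrib_left sum_subtractf algebra_simps)
    moreover have "(\<Sum>j=i0..k. f j * (v j - v i0)) = (\<Sum>j\<in>{i0<..k}. f j * (v j - v i0))"
      by (rule sum.mono_neutral_right) auto
    ultimately show ?thesis by simp
  qed
  define G where "G = (\<lambda>p. case p of ((s,l),\<gamma>) \<Rightarrow> if l \<le> k then \<gamma> * (v s / v l) * (v l - v s) else (0::real))"
  have GC: "sum_list (map G L) = CSk v k L" unfolding G_def CSk_def by (simp only: split_def)
  have part1: "(\<Sum>j\<in>{1..<i0}. f j * v j) \<le> 2 * CSk v k L"
  proof -
    define F where "F = (\<lambda>p. \<Sum>j\<in>{1..<i0}. v j * (case p of ((s,l),\<gamma>) \<Rightarrow> if s = j \<and> l \<le> k then \<gamma> * (1 - v s / v l) else 0))"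
    have "(\<Sum>j\<in>{1..<i0}. f j * v j) = (\<Sum>j\<in>{1..<i0}. 2 * (v j * ugk v k L j))"
    proof (rule sum.cong)
      fix j assume "j \<in> {1..<i0}"
      then have "f j = 2 * ugk v k L j" using P1 by auto
      then show "f j * v j = 2 * (v j * ugk v k L j)" by simp
    qed simp
    also have "\<dots> = 2 * sum_list (map F L)"
      unfolding F_def ugk_def sum_distrib_left[symmetric] sum_list_const_mult[symmetric] sum_list_sum_swap
      by (simp only: split_def)
    also have "sum_list (map F L) \<le> sum_list (map G L)"
    proof (rule sum_list_mono)
      fix p assume p: "p \<in> set L"
      obtain s l \<gamma> where pe: "p = ((s,l),\<gamma>)" by (metis prod.collapse)
      have sl: "1 \<le> s" "s < l" "l \<le> n" "0 \<le> \<gamma>" using val p pe by auto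
      have sn: "s \<in> {1..n}" and ln: "l \<in> {1..n}" using sl by auto
      have vs: "0 < v s" using vpos[OF sn] .
      have vsl: "v s < v l" using vlt[OF sn ln sl(2)] .
      have vl: "0 < v l" using vs vsl by simp
      have tw: "\<And>j. v j * (if s = j \<and> l \<le> k then \<gamma> * (1 - v s / v l) else 0)
          = (if j = s then (if l \<le> k then v s * (\<gamma> * (1 - v s / v l)) else 0) else 0)" by auto
      have "F p = (if s \<in> {1..<i0} then (if l \<le> k then v s * (\<gamma> * (1 - v s / v l)) else 0) else 0)"
        unfolding F_def pe prod.case tw by simp
      also have "\<dots> \<le> G p"
      proof -
        have eq: "v s * (\<gamma> * (1 - v s / v l)) = \<gamma> * (v s / v l) * (v l - v s)"
          using vl by (simp add: field_simps)
        have "0 \<le> \<gamma> * (v s / v l) * (v l - v s)" using sl vs vl vsl by simp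
        then show ?thesis using eq unfolding G_def pe prod.case by auto
      qed
      finally show "F p \<le> G p" .
    qed
    finally show ?thesis using GC by simp
  qed
  have part2: "(\<Sum>j\<in>{i0<..k}. f j * (v j - v i0)) \<le> 2 * CSk v k L"
  proof -
    define F where "F = (\<lambda>p. \<Sum>j\<in>{i0<..k}. (v j - v i0) * (case p of ((s,l),\<gamma>) \<Rightarrow> if l = j then \<gamma> * (v s / v l) else 0))"
    have "(\<Sum>j\<in>{i0<..k}. f j * (v j - v i0)) = (\<Sum>j\<in>{i0<..k}. 2 * ((v j - v i0) * ut v L j))"
    proof (rule sum.cong)
      fix j assume "j \<in> {i0<..k}"
      then have "f j = 2 * ut v L j" using P2 by auto
      then show "f j * (v j - v i0) = 2 * ((v j - v i0) * ut v L j)" by simp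
    qed simp
    also have "\<dots> = 2 * sum_list (map F L)"
      unfolding F_def ut_def sum_distrib_left[symmetric] sum_list_const_mult[symmetric] sum_list_sum_swap
      by (simp only: split_def)
    also have "sum_list (map F L) \<le> sum_list (map G L)"
    proof (rule sum_list_mono)
      fix p assume p: "p \<in> set L"
      obtain s l \<gamma> where pe: "p = ((s,l),\<gamma>)" by (metis prod.collapse)
      have sl: "1 \<le> s" "s < l" "l \<le> n" "0 \<le> \<gamma>" using val p pe by auto
      have sn: "s \<in> {1..n}" and ln: "l \<in> {1..n}" using sl by auto
      have vs: "0 < v s" using vpos[OF sn] .
      have vsl: "v s < v l" using vlt[OF sn ln sl(2)] .
      have vl: "0 < v l" using vs vsl by simp
      have gr: "0 \<le> \<gamma> * (v s / v l)" using sl vs vl by simp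
      have tw: "\<And>j. (v j - v i0) * (if l = j then \<gamma> * (v s / v l) else 0)
          = (if j = l then (v l - v i0) * (\<gamma> * (v s / v l)) else 0)" by auto
      have "F p = (if l \<in> {i0<..k} then (v l - v i0) * (\<gamma> * (v s / v l)) else 0)"
        unfolding F_def pe prod.case tw by simp
      also have "\<dots> \<le> G p"
      proof (cases "l \<in> {i0<..k}")
        case True
        then have "s \<le> i0" using P3 p pe by auto
        moreover have "i0 \<in> {1..n}" using True i0 k sl by auto
        ultimately have "v s \<le> v i0" using vle_iff[OF sn] by simp
        then have "(v l - v i0) * (\<gamma> * (v s / v l)) \<le> (v l - v s) * (\<gamma> * (v s / v l))"
          using gr by (intro mult_right_mono) auto
        then show ?thesis using True unfolding G_def pe prod.case by (simp add: mult_ac)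
      next
        case False
        have "0 \<le> v l - v s" using vsl by simp
        from mult_nonneg_nonneg[OF gr this] have "0 \<le> \<gamma> * (v s / v l) * (v l - v s)" .
        then show ?thesis using False unfolding G_def pe prod.case by auto
      qed
      finally show "F p \<le> G p" .
    qed
    finally show ?thesis using GC by simp
  qed
  show ?thesis using split part1 part2 by linarith
qed

lemma cdf_Suc: "cdf f (Suc i) = cdf f i + f (Suc i)"
  unfolding cdf_def by simp

lemma cdf_mono: "i \<le> j \<Longrightarrow> j \<le> n \<Longrightarrow> cdf f i \<le> cdf f j"
  unfolding cdf_def using f_pos by (intro sum_mono2) (auto intro: less_imp_le)

lemma cdf_nonneg: "i \<le> n \<Longrightarrow> 0 \<le> cdf f i"
  using cdf_mono[of 0 i] by (simp add: cdf_def)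

lemma integral_sm:
  assumes m: "0 \<le> m"
  shows "integral {0..m} (surplus_mass n v f Z)
     = (\<Sum>i=1..n. cs_scheme n v f Z i * (min m (cdf f i) - min m (cdf f (i - 1))))"
proof -
  have eq: "surplus_mass n v f Z = (\<lambda>x. \<Sum>i=1..n. if cdf f (i - 1) < x \<and> x \<le> cdf f i then cs_scheme n v f Z i else 0)"
    by (rule ext) (simp add: surplus_mass_def)
  have "((\<lambda>x. \<Sum>i=1..n. if cdf f (i - 1) < x \<and> x \<le> cdf f i then cs_scheme n v f Z i else 0) has_integral
      (\<Sum>i=1..n. cs_scheme n v f Z i * (min m (cdf f i) - min m (cdf f (i - 1))))) {0..m}"
  proof (rule has_integral_sum)
    fix i assume i: "i \<in> {1..n}"
    show "((\<lambda>x. if cdf f (i - 1) < x \<and> x \<le> cdf f i then cs_scheme n v f Z i else 0) has_integral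
      (cs_scheme n v f Z i * (min m (cdf f i) - min m (cdf f (i - 1))))) {0..m}"
      using i m by (intro ind_integral cdf_nonneg cdf_mono) auto
  qed simp
  then show ?thesis unfolding eq by (rule integral_unique)
qed

lemma weights:
  assumes k: "1 \<le> k" "k \<le> n" and mk: "cdf f (k - 1) < m" "m \<le> cdf f k"
  shows "(\<Sum>i=1..n. c i * (min m (cdf f i) - min m (cdf f (i - 1))))
     = (\<Sum>i=1..k-1. f i * c i) + (m - cdf f (k - 1)) * c k"
proof -
  have "(\<Sum>i=1..n. c i * (min m (cdf f i) - min m (cdf f (i - 1))))
      = (\<Sum>i=1..k. c i * (min m (cdf f i) - min m (cdf f (i - 1)))) + (\<Sum>i=Suc k..n. c i * (min m (cdf f i) - min m (cdf f (i - 1))))"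
    using sum_split_at[of 1 k n] k by simp
  also have "(\<Sum>i=Suc k..n. c i * (min m (cdf f i) - min m (cdf f (i - 1)))) = 0"
  proof (rule sum.neutral, rule ballI)
    fix i assume i: "i \<in> {Suc k..n}"
    have "k \<le> i - 1" "i - 1 \<le> n" using i by auto
    then have "m \<le> cdf f (i - 1)" using mk cdf_mono[of k "i - 1"] by auto
    moreover have "m \<le> cdf f i" using mk cdf_mono[of k i] i by auto
    ultimately show "c i * (min m (cdf f i) - min m (cdf f (i - 1))) = 0" by simp
  qed
  also have "(\<Sum>i=1..k. c i * (min m (cdf f i) - min m (cdf f (i - 1))))
      = (\<Sum>i=1..k-1. c i * (min m (cdf f i) - min m (cdf f (i - 1)))) + c k * (min m (cdf f k) - min m (cdf f (k - 1)))"
  proof -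
    show ?thesis using sum_last[OF k(1)] .
  qed
  also have "(\<Sum>i=1..k-1. c i * (min m (cdf f i) - min m (cdf f (i - 1)))) = (\<Sum>i=1..k-1. f i * c i)"
  proof (rule sum.cong)
    fix i assume i: "i \<in> {1..k-1}"
    have "cdf f i \<le> cdf f (k - 1)" using cdf_mono[of i "k-1"] i k by auto
    moreover have "cdf f (i - 1) \<le> cdf f i" using cdf_mono[of "i - 1" i] i k by auto
    moreover have "cdf f i = cdf f (i - 1) + f i" using cdf_Suc[of "i - 1"] i by simp
    ultimately show "c i * (min m (cdf f i) - min m (cdf f (i - 1))) = f i * c i" using mk by simp
  qed simp
  also have "c k * (min m (cdf f k) - min m (cdf f (k - 1))) = (m - cdf f (k - 1)) * c k"
    using mk by simp
  finally show ?thesis by simp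
qed

end

theorem lemma1:
  fixes n :: nat and v :: "nat \<Rightarrow> real" and f :: "nat \<Rightarrow> real"
    and Z' :: scheme and m :: real
  assumes v_pos: "0 < v 1"
    and v_mono: "strict_mono_on {1..n} v"
    and f_pos: "\<And>i. i \<in> {1..n} \<Longrightarrow> 0 < f i"
    and f_sum: "(\<Sum>i=1..n. f i) = 1"
    and Z': "is_scheme n f Z'"
    and m: "0 < m" "m \<le> 1"
  shows "4 * integral {0..m} (surplus_mass n v f (split_and_match n v f))
           \<ge> integral {0..m} (surplus_mass n v f Z')"
proof -
  define Z0 where "Z0 = split_and_match n v f"
  define P where "P = (\<lambda>Z k. \<Sum>i=1..k. f i * cs_scheme n v f Z i)"
  obtain g t where run: "sm_inv n v f (g, t, split_and_match_binary n v f)"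
      "\<not> sm_cont n (g, t, split_and_match_binary n v f)"
    using sm_run[where n=n and v=v and f=f, OF v_pos v_mono f_pos] by blast
  have val: "\<forall>s l \<gamma>. ((s,l),\<gamma>) \<in> set (split_and_match_binary n v f) \<longrightarrow> 1 \<le> s \<and> s < l \<and> l \<le> n \<and> 0 \<le> \<gamma>"
    using run(1) unfolding sm_inv_def prod.case by blast
  have val': "\<forall>((s,l),\<gamma>)\<in>set (split_and_match_binary n v f). 1 \<le> s \<and> s < l \<and> l \<le> n"
    using val by fastforce
  have KEY: "P Z' k \<le> 4 * P Z0 k" if k: "k \<le> n" for k
  proof -
    obtain i0 where i0: "1 \<le> i0" "i0 \<le> Suc k"
      and P1: "\<forall>j. 1 \<le> j \<and> j < i0 \<longrightarrow> f j / 2 = ugk v k (split_and_match_binary n v f) j"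
      and P2: "\<forall>j. i0 < j \<and> j \<le> k \<longrightarrow> f j / 2 = ut v (split_and_match_binary n v f) j"
      and P3: "\<forall>s l \<gamma>. ((s,l),\<gamma>) \<in> set (split_and_match_binary n v f) \<longrightarrow> i0 < l \<longrightarrow> l \<le> k \<longrightarrow> s \<le> i0"
      using sm_final[where n=n and v=v and f=f, OF v_pos v_mono f_pos run k] by blast
    have "P Z' k \<le> (\<Sum>j=1..k. f j * v j) - v i0 * (\<Sum>j=i0..k. f j)"
      unfolding P_def by (rule scheme_ub[where n=n and v=v and f=f, OF v_pos v_mono f_pos Z' k i0])
    also have "\<dots> \<le> 4 * CSk v k (split_and_match_binary n v f)"
      by (rule key_alg[where n=n and v=v and f=f, OF v_pos v_mono f_pos val k i0 P1 P2 P3])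
    also have "CSk v k (split_and_match_binary n v f) = P Z0 k"
      unfolding P_def Z0_def by (rule Z0_prefix[where n=n and v=v and f=f, OF v_pos v_mono f_pos val' k, symmetric])
    finally show ?thesis .
  qed
  have m0: "0 \<le> m" using m by simp
  have cdfn: "cdf f n = 1" using f_sum by (simp add: cdf_def)
  have ex: "\<exists>k. m \<le> cdf f k" using m cdfn by (intro exI[of _ n]) simp
  define k where "k = (LEAST k. m \<le> cdf f k)"
  have mk: "m \<le> cdf f k" using LeastI_ex[OF ex] k_def by simp
  have kn: "k \<le> n" using Least_le[of "\<lambda>k. m \<le> cdf f k" n] m cdfn k_def by simp
  have k1: "1 \<le> k"
  proof (rule ccontr)
    assume "\<not> 1 \<le> k"
    then have "k = 0" by simp
    then show False using mk m by (simp add: cdf_def)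
  qed
  have mk1: "cdf f (k - 1) < m"
    using not_less_Least[of "k - 1" "\<lambda>k. m \<le> cdf f k"] k1 k_def by auto
  have INT: "integral {0..m} (surplus_mass n v f Z) = P Z (k - 1) + (m - cdf f (k - 1)) * cs_scheme n v f Z k" for Z
    using integral_sm[where n=n and v=v and f=f and m=m and Z=Z, OF v_pos v_mono f_pos m0]
      weights[where n=n and v=v and f=f and c="cs_scheme n v f Z", OF v_pos v_mono f_pos k1 kn mk1 mk]
    by (simp add: P_def mult.commute)
  have Pk: "P Z k = P Z (k - 1) + f k * cs_scheme n v f Z k" for Z
  proof -
    show ?thesis unfolding P_def using sum_last[OF k1] .
  qed
  have fk: "0 < f k" using f_pos k1 kn by auto
  define \<theta> where "\<theta> = (m - cdf f (k - 1)) / f k"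
  have th: "0 \<le> \<theta>" "\<theta> \<le> 1"
  proof -
    have "cdf f k = cdf f (k - 1) + f k" using cdf_Suc[where n=n and v=v and f=f and i="k - 1", OF v_pos v_mono f_pos] k1 by simp
    then show "0 \<le> \<theta>" "\<theta> \<le> 1" using mk mk1 fk by (auto simp: \<theta>_def field_simps)
  qed
  have lin: "integral {0..m} (surplus_mass n v f Z) = (1 - \<theta>) * P Z (k - 1) + \<theta> * P Z k" for Z
    unfolding INT Pk using fk by (simp add: \<theta>_def field_simps)
  have A: "P Z' (k - 1) \<le> 4 * P Z0 (k - 1)" using KEY kn by simp
  have B: "P Z' k \<le> 4 * P Z0 k" using KEY kn by simp
  have "(1 - \<theta>) * P Z' (k - 1) \<le> (1 - \<theta>) * (4 * P Z0 (k - 1))" using A th by (intro mult_left_mono) auto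
  moreover have "\<theta> * P Z' k \<le> \<theta> * (4 * P Z0 k)" using B th by (intro mult_left_mono) auto
  ultimately show ?thesis unfolding Z0_def[symmetric] lin by (simp add: algebra_simps)
qed

end
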